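(* Let $W(z)=\dfrac{\arctan\sqrt{2e^{-z}-1}}{\sqrt{2e^{-z}-1}}$, with principal branches of $\arctan$ and the square root. For $|z|<\ln2$, \[ W(z)=\sum_{n=0}^{\infty}(-1)^n\Bigg[\frac{\pi}{4}\sum_{k=0}^{n}(-1)^kS(n,k)(2k-1)!!+\sum_{k=1}^{n}(-1)^kS(n,k)\frac{k!}{2^k}\sum_{\ell=1}^{k}(-1)^{\ell}\binom{2k-\ell}{k}\frac{2^{\ell/2}}{\ell}\sin\frac{3\ell\pi}{4}\Bigg]\frac{z^n}{n!}. \]
   Context: $S(n,k)$ are the Stirling numbers of the second kind, given by $\frac{(e^x-1)^k}{k!}=\sum_{n\ge k}S(n,k)\frac{x^n}{n!}$. Double factorials: $(2k-1)!!=1\cdot3\cdots(2k-1)$ for $k\ge1$, and $(-1)!!=1$. An empty sum is $0$. *)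

theory Defs
  imports "HOL-Analysis.Analysis" "HOL-Combinatorics.Stirling"
begin

text \<open>Odd double factorial: oddfact k = (2k-1)!! = 1*3*...*(2k-1), with oddfact 0 = (-1)!! = 1.\<close>
definition oddfact :: "nat \<Rightarrow> nat" where
  "oddfact k = (\<Prod>i=1..k. 2*i - 1)"

definition W :: "complex \<Rightarrow> complex" where
  "W z = Arctan (csqrt (2 * exp (-z) - 1)) / csqrt (2 * exp (-z) - 1)"

definition Wcoeff :: "nat \<Rightarrow> real" where
  "Wcoeff n = (-1)^n *
     (pi/4 * (\<Sum>k=0..n. (-1)^k * real (Stirling n k) * real (oddfact k))
      + (\<Sum>k=1..n. (-1)^k * real (Stirling n k) * (fact k / 2^k) *
          (\<Sum>l=1..k. (-1)^l * real ((2*k - l) choose k) * (2 powr (real l / 2) / real l)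
                        * sin (3 * real l * pi / 4))))"

end

theory Submission
  imports Defs "HOL-Complex_Analysis.Complex_Analysis"
begin


definition phi :: "nat \<Rightarrow> real" where
  "phi l = (-1)^l * 2 powr (real l / 2) * sin (3 * real l * pi / 4)"

lemma phi_0: "phi 0 = 0" by (simp add: phi_def)

lemma phi_1: "phi 1 = -1"
proof -
  have e: "3 * pi / 4 = pi - pi/4" by simp
  have s: "sin (3 * pi / 4) = sqrt 2 / 2" unfolding e sin_pi_minus sin_45 ..
  have "(2::real) powr (1/2) = sqrt 2" by (simp add: powr_half_sqrt)
  then show ?thesis by (simp add: phi_def s)
qed

lemma phi_rec: "phi (l+2) = 2 * phi (l+1) - 2 * phi l"
proof -
  define a where "a = 3 * real l * pi / 4"
  define s where "s = (2::real) powr (real l / 2)"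
  have c34: "cos (3 * pi / 4) = - (sqrt 2 / 2)"
  proof -
    have e: "3 * pi / 4 = pi - pi/4" by simp
    show ?thesis unfolding e cos_pi_minus cos_45 ..
  qed
  have s34: "sin (3 * pi / 4) = sqrt 2 / 2"
  proof -
    have e: "3 * pi / 4 = pi - pi/4" by simp
    show ?thesis unfolding e sin_pi_minus sin_45 ..
  qed
  have e2: "3 * real (l+2) * pi / 4 = a + 3 * pi / 2" by (simp add: a_def field_simps)
  have e1: "3 * real (l+1) * pi / 4 = a + 3 * pi / 4" by (simp add: a_def field_simps)
  have e32: "3 * pi / 2 = 3/2 * pi" by simp
  have sin2: "sin (a + 3 * pi / 2) = - cos a"
    unfolding e32 sin_add cos_3over2_pi sin_3over2_pi by simp
  have sin1: "sin (a + 3 * pi / 4) = sqrt 2 / 2 * (cos a - sin a)"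
    unfolding sin_add c34 s34 by (simp add: algebra_simps)
  have p2: "(2::real) powr (real (l+2) / 2) = 2 * s"
    by (simp add: s_def add_divide_distrib powr_add)
  have p1: "(2::real) powr (real (l+1) / 2) = sqrt 2 * s"
    by (simp add: s_def add_divide_distrib powr_add powr_half_sqrt)
  have "phi (l+2) = (-1)^l * (2 * s) * (- cos a)"
    unfolding phi_def p2 e2 sin2 by simp
  moreover have "phi (l+1) = - ((-1)^l * (sqrt 2 * s) * (sqrt 2 / 2 * (cos a - sin a)))"
    unfolding phi_def p1 e1 sin1 by simp
  moreover have "phi l = (-1)^l * s * sin a"
    unfolding phi_def s_def a_def by simp
  moreover have "\<And>x. sqrt 2 * (sqrt 2 * x) = (2::real) * x" by (simp add: mult.assoc[symmetric])
  ultimately show ?thesis by (simp add: field_simps)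
qed

definition beta :: "nat \<Rightarrow> nat \<Rightarrow> real" where
  "beta k j = (if j = 0 then (if k = 0 then 1 else 0) else
     if j \<le> k then real j * fact (2*k-j-1) / (fact k * fact (k-j)) else 0)"

lemma beta_diag: "beta k k = 1"
proof (cases k)
  case (Suc k')
  then show ?thesis by (simp add: beta_def fact_Suc)
qed (simp add: beta_def)

lemma beta_zero: "k > 0 \<Longrightarrow> beta k 0 = 0" by (simp add: beta_def)
lemma beta_big: "k < j \<Longrightarrow> beta k j = 0" by (simp add: beta_def)

lemma beta_rec: "beta (Suc k) (Suc j) - beta (Suc k) (Suc (Suc j)) = beta k j"
proof (cases j)
  case 0
  show ?thesis
  proof (cases k)
    case 0
    then show ?thesis using \<open>j = 0\<close> by (simp add: beta_def)
  next
    case (Suc k')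
    define F where "F = (fact (2*k'+1) :: real)"
    define G where "G = (fact k' :: real)"
    have c: "fact (2*k'+2) = (2*k'+2) * F"
      using fact_Suc[of "2*k'+1", where 'a=real] by (simp add: F_def)
    have d: "fact (k'+1) = (k'+1) * G" by (simp add: G_def)
    have d2: "fact (k'+2) = (k'+2) * ((k'+1) * G)"
      using fact_Suc[of "k'+1", where 'a=real] d by simp
    have a: "beta (Suc k) (Suc 0) = (2*k'+2) * F / (((k'+2) * ((k'+1) * G)) * ((k'+1) * G))"
      using Suc unfolding c[symmetric] d[symmetric] d2[symmetric] by (simp add: beta_def)
    have b: "beta (Suc k) (Suc (Suc 0)) = 2 * F / (((k'+2) * ((k'+1) * G)) * G)"
      using Suc unfolding d2[symmetric] by (simp add: beta_def F_def G_def)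
    have pos: "F > 0" "G > 0" by (auto simp: F_def G_def)
    have "beta (Suc k) (Suc 0) - beta (Suc k) (Suc (Suc 0)) = 0"
    proof -
      have nz: "real k' + 2 > 0" "real k' + 1 > 0" by auto
      have "(2*k'+2) * F / (((k'+2) * ((k'+1) * G)) * ((k'+1) * G))
          = ((k'+1) * (2*F)) / ((k'+1) * (((k'+2) * ((k'+1) * G)) * G))"
        by (simp add: algebra_simps)
      also have "\<dots> = 2 * F / (((k'+2) * ((k'+1) * G)) * G)"
        by (rule mult_divide_mult_cancel_left) simp
      finally show ?thesis unfolding a b by simp

    qed
    then show ?thesis using \<open>j = 0\<close> Suc by (simp add: beta_def)
  qed
next
  case (Suc j')
  consider "k < j" | "k = j" | "j < k" by linarith
  then show ?thesis
  proof cases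
    case 1 then show ?thesis by (simp add: beta_big)
  next
    case 2 then show ?thesis using Suc by (simp add: beta_diag beta_big)
  next
    case 3
    then obtain m where k: "k = j + 1 + m" by (metis add.commute less_imp_Suc_add add_Suc_right Suc_eq_plus1)
    define F where "F = (fact (j+1+2*m) :: real)"
    define H where "H = (fact (j+1+m) :: real)"
    define M where "M = (fact m :: real)"
    have e1: "fact (j+2+2*m) = (j+2+2*m) * F"
      using fact_Suc[of "j+1+2*m", where 'a=real] by (simp add: F_def)
    have e2: "fact (j+2+m) = (j+2+m) * H"
      using fact_Suc[of "j+1+m", where 'a=real] by (simp add: H_def)
    have e3: "fact (m+1) = (m+1) * M" by (simp add: M_def)
    have a: "beta (Suc k) (Suc j) = (j+1) * ((j+2+2*m) * F) / (((j+2+m) * H) * ((m+1) * M))"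
      unfolding e1[symmetric] e2[symmetric] e3[symmetric] unfolding beta_def using k
      by (simp add: algebra_simps)
    have b: "beta (Suc k) (Suc (Suc j)) = (j+2) * F / (((j+2+m) * H) * M)"
      unfolding e2[symmetric] unfolding beta_def F_def M_def using k by (simp add: algebra_simps)
    have c: "beta k j = j * F / (H * ((m+1) * M))"
      unfolding e3[symmetric] unfolding beta_def F_def H_def using k Suc by (simp add: algebra_simps)
    have pos: "F > 0" "H > 0" "M > 0" by (auto simp: F_def H_def M_def)
    define D where "D = ((j+2+m) * H) * ((m+1) * M)"
    have b': "(j+2) * F / (((j+2+m) * H) * M) = ((m+1) * ((j+2) * F)) / D"
    proof -
      have "((m+1) * ((j+2) * F)) / D = ((m+1) * ((j+2) * F)) / ((m+1) * (((j+2+m) * H) * M))"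
        unfolding D_def by (simp add: algebra_simps)
      also have "\<dots> = (j+2) * F / (((j+2+m) * H) * M)"
        by (rule mult_divide_mult_cancel_left) simp
      finally show ?thesis by simp
    qed
    have c': "j * F / (H * ((m+1) * M)) = ((j+2+m) * (j * F)) / D"
    proof -
      have "((j+2+m) * (j * F)) / D = ((j+2+m) * (j * F)) / ((j+2+m) * (H * ((m+1) * M)))"
        unfolding D_def by (simp add: algebra_simps)
      also have "\<dots> = j * F / (H * ((m+1) * M))"
        by (rule mult_divide_mult_cancel_left) simp
      finally show ?thesis by simp
    qed
    have a': "beta (Suc k) (Suc j) = (j+1) * ((j+2+2*m) * F) / D" unfolding a D_def ..
    have "(j+1) * ((j+2+2*m) * F) / D - ((m+1) * ((j+2) * F)) / D = ((j+1) * ((j+2+2*m) * F) - ((m+1) * ((j+2) * F))) / D"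
      by (rule diff_divide_distrib[symmetric])
    also have "(j+1) * ((j+2+2*m) * F) - ((m+1) * ((j+2) * F)) = ((j+2+m) * (j * F))"
      by (simp add: algebra_simps)
    finally show ?thesis unfolding a' b c b' c' .
  qed
qed

definition Sfun :: "nat \<Rightarrow> real" where
  "Sfun k = (\<Sum>j\<le>k. beta k j * phi (j+1))"

lemma Sfun_step: "Sfun (Suc k) = 2 * Sfun k"
proof -
  define N where "N = Suc k"
  define om where "om j = (if j = 0 then 0 else phi (j-1))" for j
  have X: "(\<Sum>j\<le>k. beta N (j+1) * phi (j+1)) = (\<Sum>j\<le>N. beta N j * phi j)"
    unfolding N_def sum.atMost_Suc_shift by (simp add: phi_0)
  have Y1: "(\<Sum>j\<le>N. beta N j * om j) = (\<Sum>j\<le>k. beta N (j+1) * phi j)"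
    unfolding N_def sum.atMost_Suc_shift by (simp add: om_def)
  have Y2: "(\<Sum>j\<le>Suc k. beta N (j+1) * phi j) = (\<Sum>j\<le>k. beta N (j+2) * phi (j+1))"
    unfolding sum.atMost_Suc_shift by (simp add: phi_0)
  have Y3: "(\<Sum>j\<le>Suc k. beta N (j+1) * phi j) = (\<Sum>j\<le>k. beta N (j+1) * phi j)"
    unfolding sum.atMost_Suc by (simp add: beta_big N_def)
  have "Sfun k = (\<Sum>j\<le>k. (beta N (j+1) - beta N (j+2)) * phi (j+1))"
    unfolding Sfun_def N_def using beta_rec by simp
  also have "\<dots> = (\<Sum>j\<le>k. beta N (j+1) * phi (j+1)) - (\<Sum>j\<le>k. beta N (j+2) * phi (j+1))"
    by (simp add: sum_subtractf left_diff_distrib)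
  finally have Sk: "Sfun k = (\<Sum>j\<le>N. beta N j * phi j) - (\<Sum>j\<le>N. beta N j * om j)"
    using X Y1 Y2 Y3 by simp
  have "Sfun N - 2 * Sfun k = (\<Sum>j\<le>N. beta N j * (phi (j+1) - 2 * phi j + 2 * om j))"
    unfolding Sk Sfun_def[of N] by (simp add: sum_subtractf sum.distrib sum_distrib_left algebra_simps)
  also have "\<dots> = 0"
  proof (rule sum.neutral, rule ballI)
    fix j assume "j \<in> {..N}"
    show "beta N j * (phi (j+1) - 2 * phi j + 2 * om j) = 0"
    proof (cases j)
      case 0 then show ?thesis by (simp add: beta_zero N_def)
    next
      case (Suc i)
      have "phi (i+2) = 2 * phi (i+1) - 2 * phi i" by (rule phi_rec)
      then show ?thesis using Suc by (simp add: om_def)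
    qed
  qed
  finally show ?thesis unfolding N_def by simp
qed

lemma Sfun_closed: "Sfun k = - (2^k)"
proof (induction k)
  case 0 then show ?case by (simp add: Sfun_def beta_def phi_1[simplified])
next
  case (Suc k) then show ?case by (simp add: Sfun_step)
qed

lemma L1:
  assumes "1 \<le> l" "l \<le> k"
  shows "real (k+1) * real ((2*(k+1) - l) choose (k+1)) - real (4*k+2) * real ((2*k - l) choose k)
         = real l * beta k (l-1)"
proof -
  obtain m where k: "k = l + m" using assms by (metis le_add_diff_inverse)
  define F where "F = (fact (l+2*m) :: real)"
  define H where "H = (fact (l+m) :: real)"
  define M where "M = (fact m :: real)"
  define D where "D = H * ((m+1) * M)"
  have pos: "F > 0" "H > 0" "M > 0" by (auto simp: F_def H_def M_def)
  have c1: "real ((2*k - l) choose k) = ((m+1) * F) / D"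
  proof -
    have "real ((2*k - l) choose k) = fact (l+2*m) / (fact (l+m) * fact m)"
      using binomial_fact[of "l+m" "l+2*m", where 'a=real] k by (simp add: algebra_simps)
    also have "\<dots> = ((m+1) * F) / ((m+1) * (H * M))" unfolding F_def H_def M_def
      by (rule mult_divide_mult_cancel_left[symmetric]) simp
    finally show ?thesis unfolding D_def by (simp add: algebra_simps)
  qed
  have c2: "real (k+1) * real ((2*(k+1) - l) choose (k+1)) = ((l+2*m+2) * (l+2*m+1) * F) / D"
  proof -
    have f1: "fact (l+2*m+2) = (l+2*m+2) * ((l+2*m+1) * F)"
      using fact_Suc[of "l+2*m+1", where 'a=real] fact_Suc[of "l+2*m", where 'a=real]
      by (simp add: F_def)
    have f2: "fact (l+m+1) = (l+m+1) * H" by (simp add: H_def)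
    have f3: "fact (m+1) = (m+1) * M" by (simp add: M_def)
    have "real ((2*(k+1) - l) choose (k+1)) = fact (l+2*m+2) / (fact (l+m+1) * fact (m+1))"
      using binomial_fact[of "l+m+1" "l+2*m+2", where 'a=real] k by (simp add: algebra_simps)
    also have "\<dots> = ((l+2*m+2) * ((l+2*m+1) * F)) / ((l+m+1) * H * ((m+1) * M))"
      unfolding f1 f2 f3 by (simp add: algebra_simps)
    finally have "real (k+1) * real ((2*(k+1) - l) choose (k+1))
        = (l+m+1) * (((l+2*m+2) * ((l+2*m+1) * F)) / ((l+m+1) * (H * ((m+1) * M))))"
      using k by (simp add: algebra_simps)
    also have "\<dots> = ((l+m+1) * ((l+2*m+2) * (l+2*m+1) * F)) / ((l+m+1) * D)"
      unfolding D_def by (simp add: algebra_simps)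
    also have "\<dots> = ((l+2*m+2) * (l+2*m+1) * F) / D"
      by (rule mult_divide_mult_cancel_left) simp
    finally show ?thesis .
  qed
  have c3: "beta k (l-1) = ((l-1) * F) / D"
  proof (cases "l = 1")
    case True then show ?thesis using k by (simp add: beta_def)
  next
    case False
    have f3: "fact (m+1) = (m+1) * M" by (simp add: M_def)
    have e1: "2*k - (l-1) - 1 = l + 2*m" "k - (l-1) = m+1" using k False assms by auto
    show ?thesis using False assms unfolding beta_def e1 D_def f3 F_def H_def M_def k
      by (simp add: algebra_simps)
  qed
  have "real (k+1) * real ((2*(k+1) - l) choose (k+1)) - real (4*k+2) * real ((2*k - l) choose k)
      = ((l+2*m+2) * (l+2*m+1) * F - (4*k+2) * ((m+1) * F)) / D"
    unfolding c1 c2 by (simp add: diff_divide_distrib)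
  also have "(l+2*m+2) * (l+2*m+1) * F - (4*k+2) * ((m+1) * F) = l * ((l-1) * F)"
  proof -
    have "real (l-1) = real l - 1" using assms by simp
    then show ?thesis using k by (simp add: algebra_simps)
  qed
  finally show ?thesis unfolding c3 by simp
qed

definition Asum :: "nat \<Rightarrow> real" where
  "Asum k = (\<Sum>l=1..k. real ((2*k - l) choose k) * (phi l / real l))"

lemma A_rec: "real (k+1) * Asum (k+1) - real (4*k+2) * Asum k = Sfun k"
proof -
  have 1: "real (k+1) * Asum (k+1) = (\<Sum>l=1..k. real (k+1) * real ((2*(k+1)-l) choose (k+1)) * (phi l / real l)) + phi (k+1)"
  proof -
    have "2 * (k+1) - (k+1) = k+1" by simp
    then have "real (k+1) * (real ((2*(k+1) - (k+1)) choose (k+1)) * (phi (k+1) / real (k+1))) = phi (k+1)"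
      by simp
    have "Asum (k+1) = (\<Sum>l=1..k. real ((2*(k+1) - l) choose (k+1)) * (phi l / real l))
        + real ((2*(k+1) - (k+1)) choose (k+1)) * (phi (k+1) / real (k+1))"
      unfolding Asum_def by simp
    then show ?thesis unfolding Asum_def
      by (simp add: distrib_left sum_distrib_left mult.assoc del: of_nat_Suc)
  qed
  have 2: "real (4*k+2) * Asum k = (\<Sum>l=1..k. real (4*k+2) * real ((2*k-l) choose k) * (phi l / real l))"
    unfolding Asum_def by (simp add: sum_distrib_left mult.assoc)
  have 3: "(\<Sum>l=1..k. real (k+1) * real ((2*(k+1)-l) choose (k+1)) * (phi l / real l))
          - (\<Sum>l=1..k. real (4*k+2) * real ((2*k-l) choose k) * (phi l / real l))
          = (\<Sum>l=1..k. beta k (l-1) * phi l)"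
    unfolding sum_subtractf[symmetric]
  proof (rule sum.cong[OF refl])
    fix l assume l: "l \<in> {1..k}"
    have "real (k+1) * real ((2*(k+1)-l) choose (k+1)) * (phi l / real l)
          - real (4*k+2) * real ((2*k-l) choose k) * (phi l / real l)
          = (real (k+1) * real ((2*(k+1)-l) choose (k+1)) - real (4*k+2) * real ((2*k-l) choose k)) * (phi l / real l)"
      by (simp add: algebra_simps)
    also have "\<dots> = real l * beta k (l-1) * (phi l / real l)" using l L1[of l k] by simp
    also have "\<dots> = beta k (l-1) * phi l" using l by simp
    finally show "real (k+1) * real ((2*(k+1)-l) choose (k+1)) * (phi l / real l)
          - real (4*k+2) * real ((2*k-l) choose k) * (phi l / real l) = beta k (l-1) * phi l" .
  qed
  have 4: "(\<Sum>l=1..k. beta k (l-1) * phi l) = (\<Sum>j<k. beta k j * phi (j+1))"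
    using sum.atLeast1_atMost_eq[of "\<lambda>l. beta k (l-1) * phi l" k] by simp
  have 5: "Sfun k = (\<Sum>j<k. beta k j * phi (j+1)) + phi (k+1)"
    unfolding Sfun_def lessThan_Suc_atMost[symmetric] by (simp add: beta_diag)
  show ?thesis using 1 2 3 4 5 by simp
qed

lemma A_rec': "real (k+1) * Asum (k+1) = real (4*k+2) * Asum k - 2^k"
  using A_rec[of k] Sfun_closed[of k] by simp

definition bb :: "nat \<Rightarrow> real" where
  "bb k = pi/4 * real (oddfact k) + fact k / 2^k * Asum k"

lemma oddfact_Suc: "oddfact (Suc k) = (2*k+1) * oddfact k"
  unfolding oddfact_def by simp

lemma bb_0: "bb 0 = pi/4"
  by (simp add: bb_def oddfact_def Asum_def)

lemma bb_Suc: "bb (Suc k) = (2*k+1) * bb k - fact k / 2"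
proof -
  have r: "fact (Suc k) / 2^(Suc k) * Asum (Suc k) = fact k / 2^(Suc k) * (real (k+1) * Asum (k+1))"
    by (simp add: fact_Suc algebra_simps)
  also have "\<dots> = fact k / 2^(Suc k) * (real (4*k+2) * Asum k - 2^k)"
    using A_rec'[of k] by simp
  also have "\<dots> = (2*k+1) * (fact k / 2^k * Asum k) - fact k / 2"
    by (simp add: field_simps)
  finally have r': "fact (Suc k) / 2^(Suc k) * Asum (Suc k) = (2*k+1) * (fact k / 2^k * Asum k) - fact k / 2" .
  show ?thesis unfolding bb_def oddfact_Suc r' by (simp add: algebra_simps)
qed

lemma Wcoeff_bb: "Wcoeff n = (-1)^n * (\<Sum>k=0..n. (-1)^k * real (Stirling n k) * bb k)"
proof -
  have inner: "(\<Sum>l=1..k. (-1)^l * real ((2*k - l) choose k) * (2 powr (real l / 2) / real l)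
                        * sin (3 * real l * pi / 4)) = Asum k" for k
    unfolding Asum_def phi_def by (rule sum.cong) (simp_all add: algebra_simps)
  have ext: "(\<Sum>k=1..n. (-1)^k * real (Stirling n k) * (fact k / 2^k) * Asum k)
      = (\<Sum>k=0..n. (-1)^k * real (Stirling n k) * (fact k / 2^k) * Asum k)"
  proof -
    have "{0..n} = insert 0 {1..n}" by auto
    then show ?thesis by (simp add: Asum_def)
  qed
  show ?thesis unfolding Wcoeff_def inner ext bb_def
    by (simp add: sum_distrib_left sum.distrib algebra_simps)
qed



definition UU :: "complex set" where "UU = {x. 2*x - 1 \<notin> \<real>\<^sub>\<le>\<^sub>0}"
definition gg :: "complex \<Rightarrow> complex" where "gg x = Arctan (csqrt (2*x-1)) / csqrt (2*x-1)"

lemma open_UU: "open UU"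
proof -
  have "UU = (\<lambda>x. 2*x - 1) -` (- \<real>\<^sub>\<le>\<^sub>0)" by (auto simp: UU_def)
  moreover have "open (- (\<real>\<^sub>\<le>\<^sub>0 :: complex set))" by (simp add: open_Compl)
  moreover have "open ((\<lambda>x. 2*x - 1) -` (- (\<real>\<^sub>\<le>\<^sub>0 :: complex set)))"
    by (rule continuous_open_vimage[OF \<open>open (- \<real>\<^sub>\<le>\<^sub>0)\<close>]) (intro continuous_intros)
  ultimately show ?thesis by simp
qed

lemma UU_props:
  assumes "x \<in> UU"
  shows "x \<noteq> 0" "2*x - 1 \<noteq> 0" "Re (csqrt (2*x-1)) > 0" "csqrt (2*x-1) \<noteq> 0"
proof -
  have nn: "2*x - 1 \<notin> \<real>\<^sub>\<le>\<^sub>0" using assms by (simp add: UU_def)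
  show "x \<noteq> 0" using nn by (auto simp: complex_nonpos_Reals_iff)
  show nz: "2*x - 1 \<noteq> 0"
  proof
    assume "2*x - 1 = 0"
    then have "2*x - 1 \<in> \<real>\<^sub>\<le>\<^sub>0" by simp
    with nn show False by simp
  qed
  show "Re (csqrt (2*x-1)) > 0"
  proof (rule ccontr)
    assume "\<not> Re (csqrt (2*x-1)) > 0"
    with csqrt_principal[of "2*x-1"] have r: "Re (csqrt (2*x-1)) = 0" by auto
    define b where "b = Im (csqrt (2*x-1))"
    have "csqrt (2*x-1) = \<i> * of_real b" using r by (simp add: b_def complex_eq_iff)
    then have "2*x - 1 = (\<i> * of_real b)^2" by (metis power2_csqrt)
    then have "2*x - 1 = - of_real (b^2)" by (simp add: power_mult_distrib)
    then have "2*x - 1 \<in> \<real>\<^sub>\<le>\<^sub>0" by (simp add: complex_nonpos_Reals_iff)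
    with nn show False by simp
  qed
  then show "csqrt (2*x-1) \<noteq> 0" by (metis less_irrefl zero_complex.sel(1))
qed

lemma gg_deriv:
  assumes "x \<in> UU"
  shows "(gg has_field_derivative ((1/(2*x) - gg x)/(2*x-1))) (at x)"
proof -
  define v where "v = csqrt (2*x-1)"
  note P = UU_props[OF assms, folded v_def]
  have nn: "2*x - 1 \<notin> \<real>\<^sub>\<le>\<^sub>0" using assms by (simp add: UU_def)
  have dv: "((\<lambda>y. csqrt (2*y-1)) has_field_derivative (2 / (2 * v))) (at x)"
    unfolding v_def
    by (rule derivative_eq_intros refl nn | simp)+
  have da: "(Arctan has_field_derivative inverse (1 + v^2)) (at v)"
    by (rule has_field_derivative_Arctan) (use P in auto)
  have dav: "((\<lambda>y. Arctan (csqrt (2*y-1))) has_field_derivative (inverse (1 + v^2) * (2 / (2 * v)))) (at x)"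
    using DERIV_chain2[OF da[unfolded v_def] dv[unfolded v_def]] by (simp add: v_def)
  have dq: "((\<lambda>y. Arctan (csqrt (2*y-1)) / csqrt (2*y-1)) has_field_derivative
      ((inverse (1 + v^2) * (2 / (2 * v))) * v - Arctan v * (2 / (2 * v))) / (v * v)) (at x)"
    using DERIV_divide[OF dav dv] P by (simp add: v_def)
  have v2: "v^2 = 2*x-1" by (simp add: v_def)
  have x2: "1 + v^2 = 2*x" by (simp add: v2)
  have "((inverse (1 + v^2) * (2 / (2 * v))) * v - Arctan v * (2 / (2 * v))) / (v * v)
       = (1/(2*x) - gg x)/(2*x-1)"
    using P unfolding x2 gg_def v_def[symmetric] power2_eq_square[symmetric] v2
    by (simp add: field_simps)
  then show ?thesis using dq unfolding gg_def[abs_def] by simp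
qed

lemma gg_holo: "gg holomorphic_on UU"
  using gg_deriv by (auto simp: holomorphic_on_def field_differentiable_def
      intro: has_field_derivative_at_within)

lemma hd_deriv:
  assumes "y \<in> UU"
  shows "((deriv ^^ k) gg has_field_derivative (deriv ^^ Suc k) gg y) (at y)"
  using holomorphic_derivI[OF holomorphic_higher_deriv[OF gg_holo open_UU] open_UU assms, of k UNIV]
  by simp

lemma zero_deriv:
  assumes "open S" "x \<in> S" "\<forall>y\<in>S. f y = 0" "(f has_field_derivative D) (at x)"
  shows "D = 0"
proof -
  have "((\<lambda>y. 0) has_field_derivative 0) (at x)" by simp
  then have "(f has_field_derivative 0) (at x)"
    by (rule has_field_derivative_transform_within_open[OF _ assms(1,2)]) (use assms(3) in simp)
  then show ?thesis using assms(4) DERIV_unique by blast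
qed

lemma gg_ode: "y \<in> UU \<Longrightarrow> 2 * y^1 * ((2*y-1) * (deriv ^^ 1) gg y + 1 * (deriv ^^ 0) gg y) = 1"
proof -
  assume y: "y \<in> UU"
  have "deriv gg y = (1/(2*y) - gg y)/(2*y-1)" using gg_deriv[OF y] by (rule DERIV_imp_deriv)
  then show ?thesis using UU_props[OF y] by (simp add: field_simps)
qed

lemma gg_higher:
  "\<forall>y\<in>UU. 2 * y^(k+1) * ((2*y-1) * (deriv ^^ Suc k) gg y + of_nat (2*k+1) * (deriv ^^ k) gg y)
     = (-1)^k * fact k"
proof (induction k)
  case 0
  then show ?case using gg_ode by simp
next
  case (Suc k)
  show ?case
  proof
    fix x assume x: "x \<in> UU"
    define f where "f y = 2 * y^(k+1) * ((2*y-1) * (deriv ^^ Suc k) gg y + of_nat (2*k+1) * (deriv ^^ k) gg y)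
        - (-1)^k * fact k" for y
    have f0: "\<forall>y\<in>UU. f y = 0" using Suc.IH by (simp add: f_def)
    note d0 = hd_deriv[OF x, of k]
    note d1 = hd_deriv[OF x, of "Suc k"]
    have "(f has_field_derivative
        (2 * (of_nat (k+1) * x^k) * ((2*x-1) * (deriv ^^ Suc k) gg x + of_nat (2*k+1) * (deriv ^^ k) gg x)
         + 2 * x^(k+1) * (2 * (deriv ^^ Suc k) gg x + (2*x-1) * (deriv ^^ Suc (Suc k)) gg x
              + of_nat (2*k+1) * (deriv ^^ Suc k) gg x))) (at x)"
      unfolding f_def
      by (rule derivative_eq_intros d0 d1 refl | simp)+
    then have D: "2 * (of_nat (k+1) * x^k) * ((2*x-1) * (deriv ^^ Suc k) gg x + of_nat (2*k+1) * (deriv ^^ k) gg x)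
         + 2 * x^(k+1) * (2 * (deriv ^^ Suc k) gg x + (2*x-1) * (deriv ^^ Suc (Suc k)) gg x
              + of_nat (2*k+1) * (deriv ^^ Suc k) gg x) = 0"
      by (rule zero_deriv[OF open_UU x f0])
    have IH: "2 * x^(k+1) * ((2*x-1) * (deriv ^^ Suc k) gg x + of_nat (2*k+1) * (deriv ^^ k) gg x)
     = (-1)^k * fact k" using Suc.IH x by blast
    have xnz: "x \<noteq> 0" using UU_props[OF x] by simp
    define A where "A = (deriv ^^ Suc k) gg x"
    define B where "B = (deriv ^^ k) gg x"
    define C where "C = (deriv ^^ Suc (Suc k)) gg x"
    have D': "x * (2 * (of_nat (k+1) * x^k) * ((2*x-1) * A + of_nat (2*k+1) * B))
         + x * (2 * x^(k+1) * (2 * A + (2*x-1) * C + of_nat (2*k+1) * A)) = 0"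
      using D unfolding A_def B_def C_def by (simp add: distrib_left[symmetric])
    have IH': "2 * x^(k+1) * ((2*x-1) * A + of_nat (2*k+1) * B) = (-1)^k * fact k"
      using IH unfolding A_def B_def .
    have e1: "x * (2 * (of_nat (k+1) * x^k) * ((2*x-1) * A + of_nat (2*k+1) * B))
       = of_nat (k+1) * (2 * x^(k+1) * ((2*x-1) * A + of_nat (2*k+1) * B))"
      by (simp add: algebra_simps)
    have e2: "x * (2 * x^(k+1) * (2 * A + (2*x-1) * C + of_nat (2*k+1) * A))
       = 2 * x^(Suc k+1) * ((2*x-1) * C + of_nat (2*Suc k+1) * A)"
      by (simp add: algebra_simps)
    have "2 * x^(Suc k+1) * ((2*x-1) * C + of_nat (2*Suc k+1) * A) = - (of_nat (k+1) * ((-1)^k * fact k))"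
      using D' unfolding e1 e2 IH' by (simp add: eq_neg_iff_add_eq_0 add.commute)
    also have "\<dots> = (-1)^Suc k * fact (Suc k)" by (simp add: fact_Suc)
    finally show "2 * x^(Suc k+1) * ((2*x-1) * (deriv ^^ Suc (Suc k)) gg x + of_nat (2*Suc k+1) * (deriv ^^ Suc k) gg x)
     = (-1)^Suc k * fact (Suc k)" unfolding A_def C_def .
  qed
qed

lemma one_UU: "1 \<in> UU"
proof -
  have "(1::complex) \<notin> \<real>\<^sub>\<le>\<^sub>0" by (simp add: complex_nonpos_Reals_iff)
  then show ?thesis by (simp add: UU_def)
qed

lemma gg_1: "gg 1 = of_real (pi/4)"
  using Arctan_of_real[of 1] by (simp add: gg_def arctan_one)

lemma e_formula: "(deriv ^^ k) gg 1 = of_real ((-1)^k * bb k)"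
proof (induction k)
  case 0
  then show ?case by (simp add: gg_1 bb_0)
next
  case (Suc k)
  have h: "2 * ((deriv ^^ Suc k) gg 1 + of_nat (2*k+1) * (deriv ^^ k) gg 1) = (-1)^k * fact k"
    using gg_higher[of k] one_UU by auto
  then have "(deriv ^^ Suc k) gg 1 = (-1)^k * fact k / 2 - of_nat (2*k+1) * (deriv ^^ k) gg 1"
    by (simp add: field_simps)
  also have "\<dots> = of_real ((-1)^Suc k * bb (Suc k))"
    unfolding Suc bb_Suc by (simp add: field_simps)
  finally show ?case .
qed

lemma exp_in_UU:
  assumes "norm z < ln 2"
  shows "exp (-z) \<in> UU"
proof (rule ccontr)
  define x where "x = exp (-z)"
  assume "exp (-z) \<notin> UU"
  then have "2*x - 1 \<in> \<real>\<^sub>\<le>\<^sub>0" by (simp add: UU_def x_def)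
  then have im: "Im x = 0" and re: "Re x \<le> 1/2" by (auto simp: complex_nonpos_Reals_iff)
  have "Re z \<le> norm z" using abs_Re_le_cmod[of z] by linarith
  then have "- Re z > - ln 2" using assms by linarith
  then have "exp (- Re z) > exp (- ln 2)" by simp
  moreover have "exp (- ln 2) = (1/2::real)" by (simp add: exp_minus)
  moreover have "norm x = exp (- Re z)" by (simp add: x_def norm_exp_eq_Re)
  ultimately have nx: "norm x > 1/2" by simp
  have "norm x = \<bar>Re x\<bar>" using im by (simp add: cmod_eq_Re)
  with nx re have neg: "Re x < 0" by linarith
  have "Re x = exp (- Re z) * cos (Im z)" by (simp add: x_def Re_exp)
  with neg have c: "cos (Im z) < 0" by (simp add: mult_less_0_iff)
  have "\<bar>Im z\<bar> < ln 2" using abs_Im_le_cmod[of z] assms by linarith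
  moreover have "ln 2 < (1::real)" by (rule ln_2_less_1)
  moreover have "1 < pi / 2" using pi_gt3 by linarith
  ultimately have "- (pi/2) < Im z" "Im z < pi/2" by linarith+
  then have "cos (Im z) > 0" by (rule cos_gt_zero_pi)
  with c show False by simp
qed

lemma W_eq: "W = (\<lambda>z. gg (exp (-z)))"
  by (rule ext) (simp add: W_def gg_def)

lemma stirling_shift:
  fixes X :: "nat \<Rightarrow> complex"
  shows "(\<Sum>k\<le>Suc n. of_nat (Stirling (Suc n) k) * X k)
       = (\<Sum>k\<le>n. of_nat (Stirling n k) * (of_nat k * X k + X (Suc k)))"
proof -
  have a: "(\<Sum>k\<le>Suc n. of_nat (Stirling (Suc n) k) * X k)
      = (\<Sum>k\<le>n. of_nat (Suc k) * of_nat (Stirling n (Suc k)) * X (Suc k))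
        + (\<Sum>k\<le>n. of_nat (Stirling n k) * X (Suc k))"
    unfolding sum.atMost_Suc_shift by (simp add: sum.distrib algebra_simps)
  have b: "(\<Sum>k\<le>Suc n. of_nat k * of_nat (Stirling n k) * X k)
      = (\<Sum>k\<le>n. of_nat (Suc k) * of_nat (Stirling n (Suc k)) * X (Suc k))"
    unfolding sum.atMost_Suc_shift by simp
  have c: "(\<Sum>k\<le>Suc n. of_nat k * of_nat (Stirling n k) * X k)
      = (\<Sum>k\<le>n. of_nat k * of_nat (Stirling n k) * X k)"
    unfolding sum.atMost_Suc by simp
  show ?thesis using a b c by (simp add: sum.distrib algebra_simps)
qed

lemma comp_deriv:
  assumes "norm z < ln 2"
  shows "((\<lambda>z. (deriv ^^ k) gg (exp (-z))) has_field_derivative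
           ((deriv ^^ Suc k) gg (exp (-z)) * (- exp (-z)))) (at z)"
proof -
  have e: "((\<lambda>z. exp (-z)) has_field_derivative (- exp (-z))) (at z)"
    by (rule derivative_eq_intros refl | simp)+
  show ?thesis using DERIV_chain2[OF hd_deriv[OF exp_in_UU[OF assms]] e] .
qed

lemma term_deriv:
  assumes "norm z < ln 2"
  shows "((\<lambda>z. exp (-z)^k * (deriv ^^ k) gg (exp (-z))) has_field_derivative
           - (of_nat k * (exp (-z)^k * (deriv ^^ k) gg (exp (-z)))
              + exp (-z)^Suc k * (deriv ^^ Suc k) gg (exp (-z)))) (at z)"
proof -
  have e: "((\<lambda>z. exp (-z)) has_field_derivative (- exp (-z))) (at z)"
    by (rule derivative_eq_intros refl | simp)+
  have p: "((\<lambda>z. exp (-z)^k) has_field_derivative (of_nat k * exp (-z)^k * (-1))) (at z)"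
  proof -
    have "((\<lambda>z. exp (-z)^k) has_field_derivative (of_nat k * ((- exp (-z)) * exp (-z)^(k - Suc 0)))) (at z)"
      by (rule DERIV_power[OF e])
    moreover have "of_nat k * ((- exp (-z)) * exp (-z)^(k - Suc 0)) = of_nat k * exp (-z)^k * (-1::complex)"
      by (cases k) simp_all
    ultimately show ?thesis by (simp only:)
  qed
  show ?thesis using DERIV_mult[OF p comp_deriv[OF assms]] by (simp add: algebra_simps)
qed

lemma fdb:
  "\<forall>z\<in>ball 0 (ln 2). (deriv ^^ n) W z
     = (-1)^n * (\<Sum>k\<le>n. of_nat (Stirling n k) * (exp (-z)^k * (deriv ^^ k) gg (exp (-z))))"
proof (induction n)
  case 0
  then show ?case by (simp add: W_eq)
next
  case (Suc n)
  show ?case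
  proof
    fix z :: complex assume z: "z \<in> ball 0 (ln 2)"
    then have nz: "norm z < ln 2" by simp
    define X where "X k = exp (-z)^k * (deriv ^^ k) gg (exp (-z))" for k
    have d: "((\<lambda>z. (-1)^n * (\<Sum>k\<le>n. of_nat (Stirling n k) * (exp (-z)^k * (deriv ^^ k) gg (exp (-z)))))
        has_field_derivative
        (-1)^n * (\<Sum>k\<le>n. of_nat (Stirling n k) * (- (of_nat k * X k + X (Suc k))))) (at z)"
      unfolding X_def
      by (intro DERIV_cmult DERIV_sum term_deriv[OF nz])
    have d2: "((deriv ^^ n) W has_field_derivative
        (-1)^n * (\<Sum>k\<le>n. of_nat (Stirling n k) * (- (of_nat k * X k + X (Suc k))))) (at z)"
      by (rule has_field_derivative_transform_within_open[OF d open_ball z]) (use Suc.IH in simp)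
    have "(deriv ^^ Suc n) W z = deriv ((deriv ^^ n) W) z" by simp
    also have "\<dots> = (-1)^n * (\<Sum>k\<le>n. of_nat (Stirling n k) * (- (of_nat k * X k + X (Suc k))))"
      by (rule DERIV_imp_deriv[OF d2])
    also have "\<dots> = (-1)^Suc n * (\<Sum>k\<le>n. of_nat (Stirling n k) * (of_nat k * X k + X (Suc k)))"
      by (simp only: mult_minus_right sum_negf) simp
    also have "\<dots> = (-1)^Suc n * (\<Sum>k\<le>Suc n. of_nat (Stirling (Suc n) k) * X k)"
      by (simp only: stirling_shift)
    finally show "(deriv ^^ Suc n) W z = (-1)^Suc n * (\<Sum>k\<le>Suc n. of_nat (Stirling (Suc n) k) * (exp (-z)^k * (deriv ^^ k) gg (exp (-z))))"
      unfolding X_def .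
  qed
qed

lemma W_holo: "W holomorphic_on ball 0 (ln 2)"
proof -
  have "(gg \<circ> (\<lambda>z. exp (-z))) holomorphic_on ball 0 (ln 2)"
    by (rule holomorphic_on_compose_gen[OF _ gg_holo])
       (auto intro!: holomorphic_intros exp_in_UU)
  then show ?thesis by (simp add: W_eq o_def)
qed

lemma W_coeff: "(deriv ^^ n) W 0 = of_real (Wcoeff n)"
proof -
  have "(0::complex) \<in> ball 0 (ln 2)" by simp
  then have "(deriv ^^ n) W 0 = (-1)^n * (\<Sum>k\<le>n. of_nat (Stirling n k) * (deriv ^^ k) gg 1)"
    using fdb[of n] by simp
  also have "\<dots> = of_real ((-1)^n * (\<Sum>k\<le>n. (-1)^k * real (Stirling n k) * bb k))"
    unfolding e_formula by (simp add: algebra_simps)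
  also have "\<dots> = of_real (Wcoeff n)"
    unfolding Wcoeff_bb atLeast0AtMost ..
  finally show ?thesis .
qed

theorem theorem4p2:
  fixes z :: complex
  assumes "norm z < ln 2"
  shows "(\<lambda>n. complex_of_real (Wcoeff n) * z ^ n / fact n) sums W z"
proof -
  have "z \<in> ball 0 (ln 2)" using assms by simp
  from holomorphic_power_series[OF W_holo this]
  have "(\<lambda>n. (deriv ^^ n) W 0 / fact n * (z - 0) ^ n) sums W z" .
  then show ?thesis unfolding W_coeff by (simp add: algebra_simps)
qed

end
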